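(* Let $\mathbb{F}\in\{\mathbb{R},\mathbb{C}\}$, $A\in\mathbb{F}^{m\times n}$ with $\|A\|_{\infty,col}\le1$, $\mu>0$, $x_0\in\mathbb{F}^n$ with $S=\mathrm{supp}\,x_0$ and $\#S=K$, $\epsilon\in\mathbb{F}^m$, $b=Ax_0+\epsilon$, and let $N\ge1$ with $\beta_N>0$ and $\beta_K>0$. Let $x'=x_S$ be the oracle solution and $z'=(I-A^*A)x'+A^*b$. If $\|\epsilon\|_2<\beta_N^2\sqrt{\mu}$ and $$|x_{0,j}|>\frac{\sqrt{\mu}}{\beta_N^2}+\frac{\beta_N^2\sqrt{\mu}}{\beta_K}\quad\text{for all }j\in S,$$ then $|z'_i|\notin\big[\beta_N^2\sqrt{\mu},\ \sqrt{\mu}/\beta_N^2\big]$ for all $1\le i\le n$.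
   Context: $\|A\|_{\infty,col}=\max_i\|a_i\|_2$ over the columns $a_i$ of $A$. $\mathrm{card}(x)$ is the number of nonzero entries; $\beta_k=\inf\{\|Ax\|_2/\|x\|_2:x\ne0,\ \mathrm{card}(x)\le k\}$. $A_S$ denotes $A$ with all columns with index outside $S$ set to zero, and the oracle solution is $x_S=(A_S^*A_S)^\dagger A_S^*b$, where $\dagger$ is the Moore–Penrose inverse and $A^*$ the conjugate transpose. *)

theory Defs
  imports "HOL-Analysis.Analysis"
begin

(* The scalar field F is modelled as a subset of the complex numbers:
  either the reals (\<real>) or all of \<complex> (UNIV). All data take entries in F. *)

definition in_field :: "complex set \<Rightarrow> complex ^ 'n \<Rightarrow> bool" where
  "in_field F x \<longleftrightarrow> (\<forall>i. x $ i \<in> F)"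

definition mat_in_field :: "complex set \<Rightarrow> complex ^ 'n ^ 'm \<Rightarrow> bool" where
  "mat_in_field F A \<longleftrightarrow> (\<forall>i j. A $ i $ j \<in> F)"

(* Conjugate transpose. *)
definition adjm :: "complex ^ 'n ^ 'm \<Rightarrow> complex ^ 'm ^ 'n" where
  "adjm A = transpose (map_matrix cnj A)"

(* Moore--Penrose inverse: the unique matrix satisfying the four Penrose equations. *)
definition pinv :: "complex ^ 'n ^ 'm \<Rightarrow> complex ^ 'm ^ 'n" where
  "pinv M = (THE X. M ** X ** M = M \<and> X ** M ** X = X \<and>
                    adjm (M ** X) = M ** X \<and> adjm (X ** M) = X ** M)"

(* Column-wise infinity norm: maximum Euclidean norm of a column. *)
definition col_inf_norm :: "complex ^ 'n ^ 'm \<Rightarrow> real" where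
  "col_inf_norm A = Max (range (\<lambda>j. norm (column j A)))"

definition cardv :: "complex ^ 'n \<Rightarrow> nat" where
  "cardv x = card {i. x $ i \<noteq> 0}"

definition supp :: "complex ^ 'n \<Rightarrow> 'n set" where
  "supp x = {i. x $ i \<noteq> 0}"

(* Restricted lower isometry constant beta_k, infimum over nonzero vectors in F^n. *)
definition beta :: "complex set \<Rightarrow> complex ^ 'n ^ 'm \<Rightarrow> nat \<Rightarrow> real" where
  "beta F A k = Inf {norm (A *v x) / norm x | x. in_field F x \<and> x \<noteq> 0 \<and> cardv x \<le> k}"

(* A_S: columns with index outside S set to zero. *)
definition restrict_cols :: "complex ^ 'n ^ 'm \<Rightarrow> 'n set \<Rightarrow> complex ^ 'n ^ 'm" where
  "restrict_cols A S = (\<chi> i j. if j \<in> S then A $ i $ j else 0)"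

definition orc_sol :: "complex ^ 'n ^ 'm \<Rightarrow> 'n set \<Rightarrow> complex ^ 'm \<Rightarrow> complex ^ 'n" where
  "orc_sol A S b = pinv (adjm (restrict_cols A S) ** restrict_cols A S)
                    *v (adjm (restrict_cols A S) *v b)"

end

theory Submission
  imports Defs
begin

lemma inner_cvec: "inner (x::complex^'n) y = Re (\<Sum>i\<in>UNIV. x$i * cnj (y$i))"
  by (simp add: inner_vec_def inner_complex_def Re_sum)

lemma adjm_nth[simp]: "adjm C $ i $ j = cnj (C $ j $ i)"
  by (simp add: adjm_def transpose_def)

lemma adjm_inner: "inner (adjm C *v x) y = inner (x::complex^'m) ((C::complex^'n^'m) *v y)"
proof -
  have "(\<Sum>j\<in>UNIV. (adjm C *v x)$j * cnj (y$j)) = (\<Sum>j\<in>UNIV. \<Sum>i\<in>UNIV. cnj (C$i$j) * x$i * cnj (y$j))"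
    by (simp add: matrix_vector_mult_def sum_distrib_right)
  also have "\<dots> = (\<Sum>i\<in>UNIV. \<Sum>j\<in>UNIV. cnj (C$i$j) * x$i * cnj (y$j))"
    by (rule sum.swap)
  also have "\<dots> = (\<Sum>i\<in>UNIV. x$i * cnj ((C *v y)$i))"
    by (simp add: matrix_vector_mult_def sum_distrib_left mult_ac)
  finally show ?thesis by (simp add: inner_cvec)
qed

lemma adjm_adjm[simp]: "adjm (adjm C) = C"
  by (simp add: vec_eq_iff)

lemma adjm_mult: "adjm ((C::complex^'n^'m) ** D) = adjm D ** adjm C"
  by (simp add: vec_eq_iff matrix_matrix_mult_def mult.commute)

lemma adjm_eqI:
  assumes "\<And>x y. inner ((C::complex^'n^'n) *v x) y = inner x (C *v y)"
  shows "adjm C = C"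
proof -
  have "adjm C *v x = C *v x" for x
  proof -
    have "inner (adjm C *v x - C *v x) y = 0" for y
      by (simp add: inner_diff_left adjm_inner assms)
    from this[of "adjm C *v x - C *v x"] show ?thesis by simp
  qed
  then show ?thesis by (simp add: matrix_eq)
qed

lemma cmult_scale: "(C::complex^'n^'m) *v (c *s x) = c *s (C *v x)"
  by (simp add: vec_eq_iff matrix_vector_mult_def sum_distrib_left mult_ac)

lemma inner_scale_left: "inner (c *s (x::complex^'n)) y = inner x (cnj c *s y)"
  by (simp add: inner_cvec mult_ac)

definition Rg :: "complex^'n^'m \<Rightarrow> (complex^'n) set" where
  "Rg B = range (\<lambda>x. (adjm B ** B) *v x)"

definition Pr :: "complex^'n^'m \<Rightarrow> complex^'n \<Rightarrow> complex^'n" where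
  "Pr B y = (SOME p. p \<in> Rg B \<and> (\<forall>w\<in>Rg B. inner (y - p) w = 0))"

definition Gm :: "complex^'n^'m \<Rightarrow> complex^'n \<Rightarrow> complex^'n" where
  "Gm B y = (SOME r. r \<in> Rg B \<and> (adjm B ** B) *v r = Pr B y)"

lemma M_inner0: "inner ((adjm B ** B) *v x) y = inner (B *v x) (B *v y)"
  by (simp add: matrix_vector_mul_assoc[symmetric] adjm_inner)

lemma M_inner: "inner ((adjm B ** B) *v x) y = inner x ((adjm B ** B) *v y)"
  by (metis M_inner0 inner_commute)

lemma Rg_scale: "r \<in> Rg B \<Longrightarrow> c *s r \<in> Rg B"
  unfolding Rg_def by (auto simp: cmult_scale[symmetric])

lemma Rg_add: "r \<in> Rg B \<Longrightarrow> s \<in> Rg B \<Longrightarrow> r + s \<in> Rg B"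
  unfolding Rg_def by (auto simp: matrix_vector_right_distrib[symmetric])

lemma Rg_diff: "r \<in> Rg B \<Longrightarrow> s \<in> Rg B \<Longrightarrow> r - s \<in> Rg B"
  unfolding Rg_def by (auto simp: matrix_vector_mult_diff_distrib[symmetric])

lemma Rg_M: "(adjm B ** B) *v x \<in> Rg B"
  unfolding Rg_def by auto

lemma scaleR_cvec: "c *\<^sub>R (v::complex^'n) = complex_of_real c *s v"
  by (simp add: vec_eq_iff complex_eq_iff)

lemma Rg_subspace: "subspace (Rg B)"
  unfolding subspace_def
  using Rg_add[of _ B] Rg_scale[of _ B] Rg_M[of B 0] by (auto simp: scaleR_cvec)

lemma span_Rg: "span (Rg B) = Rg B"
  by (simp add: Rg_subspace span_eq_iff)

lemma Pr_ex: "\<exists>p. p \<in> Rg B \<and> (\<forall>w\<in>Rg B. inner (y - p) w = 0)"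
proof -
  obtain p z where "p \<in> span (Rg B)" "\<And>w. w \<in> span (Rg B) \<Longrightarrow> orthogonal z w" "y = p + z"
    using orthogonal_subspace_decomp_exists[of "Rg B" y] by metis
  then show ?thesis unfolding span_Rg orthogonal_def by (intro exI[of _ p]) auto
qed

lemma Pr_spec: "Pr B y \<in> Rg B" "\<And>w. w \<in> Rg B \<Longrightarrow> inner (y - Pr B y) w = 0"
  using someI_ex[OF Pr_ex[of B y]] unfolding Pr_def[symmetric] by auto

lemma Pr_unique:
  assumes "p \<in> Rg B" "\<And>w. w \<in> Rg B \<Longrightarrow> inner (y - p) w = 0"
  shows "Pr B y = p"
proof -
  have d: "p - Pr B y \<in> Rg B" using Rg_diff[OF assms(1) Pr_spec(1)] .
  have "inner (p - Pr B y) (p - Pr B y) = inner ((y - Pr B y) - (y - p)) (p - Pr B y)"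
    by (simp add: algebra_simps)
  also have "\<dots> = 0" using Pr_spec(2)[OF d] assms(2)[OF d] by (simp add: inner_diff_left)
  finally show ?thesis by simp
qed

lemma perp_ker:
  assumes "\<And>w. w \<in> Rg B \<Longrightarrow> inner z w = 0"
  shows "(adjm B ** B) *v z = 0"
proof -
  let ?M = "adjm B ** B"
  have "inner (?M *v z) (?M *v z) = inner z (?M *v (?M *v z))" by (rule M_inner)
  also have "\<dots> = 0" by (rule assms[OF Rg_M])
  finally show ?thesis by simp
qed

lemma Rg_inj:
  assumes "r \<in> Rg B" "(adjm B ** B) *v r = 0"
  shows "r = 0"
proof -
  obtain v where v: "r = (adjm B ** B) *v v" using assms(1) unfolding Rg_def by auto
  have "inner r r = inner v ((adjm B ** B) *v r)" using v M_inner by metis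
  then show ?thesis using assms(2) by simp
qed

lemma M_Pr: "(adjm B ** B) *v Pr B x = (adjm B ** B) *v x"
proof -
  have "(adjm B ** B) *v (x - Pr B x) = 0" by (rule perp_ker) (rule Pr_spec(2))
  then show ?thesis by (simp add: matrix_vector_mult_diff_distrib)
qed

lemma Gm_ex: "\<exists>r. r \<in> Rg B \<and> (adjm B ** B) *v r = Pr B y"
proof -
  obtain u where "Pr B y = (adjm B ** B) *v u" using Pr_spec(1)[of B y] unfolding Rg_def by auto
  then show ?thesis using Pr_spec(1)[of B u] M_Pr[of B u] by metis
qed

lemma Gm_spec: "Gm B y \<in> Rg B" "(adjm B ** B) *v Gm B y = Pr B y"
  using someI_ex[OF Gm_ex[of B y]] unfolding Gm_def[symmetric] by auto

lemma Gm_unique: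
  assumes "r \<in> Rg B" "(adjm B ** B) *v r = Pr B y"
  shows "Gm B y = r"
proof -
  have "Gm B y - r = 0"
    by (rule Rg_inj[of _ B]) (auto simp: Rg_diff[OF Gm_spec(1) assms(1)] matrix_vector_mult_diff_distrib Gm_spec(2) assms(2))
  then show ?thesis by simp
qed

lemma Pr_Rg: "r \<in> Rg B \<Longrightarrow> Pr B r = r"
  by (rule Pr_unique) auto

lemma Pr_add: "Pr B (x + y) = Pr B x + Pr B y"
proof (rule Pr_unique)
  show "Pr B x + Pr B y \<in> Rg B" by (intro Rg_add Pr_spec)
  fix w assume w: "w \<in> Rg B"
  have "inner (x - Pr B x) w = 0" "inner (y - Pr B y) w = 0" using w by (auto intro: Pr_spec)
  then show "inner (x + y - (Pr B x + Pr B y)) w = 0"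
    by (simp add: inner_diff_left inner_add_left)
qed

lemma Pr_scale: "Pr B (c *s x) = c *s Pr B x"
proof (rule Pr_unique)
  show "c *s Pr B x \<in> Rg B" by (rule Rg_scale[OF Pr_spec(1)])
  fix w assume "w \<in> Rg B"
  then have "cnj c *s w \<in> Rg B" by (rule Rg_scale)
  have "c *s x - c *s Pr B x = c *s (x - Pr B x)" by (simp add: vec_eq_iff algebra_simps)
  then show "inner (c *s x - c *s Pr B x) w = 0"
  proof -
    have "inner (x - Pr B x) (cnj c *s w) = 0" by (rule Pr_spec(2)) fact
    then show ?thesis unfolding \<open>c *s x - c *s Pr B x = c *s (x - Pr B x)\<close> inner_scale_left .
  qed
qed

lemma Gm_add: "Gm B (x + y) = Gm B x + Gm B y"
  by (rule Gm_unique) (auto simp: Rg_add Gm_spec matrix_vector_right_distrib Pr_add)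

lemma Gm_scale: "Gm B (c *s x) = c *s Gm B x"
  by (rule Gm_unique) (auto simp: Rg_scale Gm_spec cmult_scale Pr_scale)

lemma Gm_linear: "Vector_Spaces.linear (*s) (*s) (Gm B)"
  unfolding Vector_Spaces.linear_iff
  by (auto simp: Gm_add Gm_scale vec.vector_space_axioms)

lemma Pr_selfadj: "inner (Pr B x) y = inner x (Pr B y)"
proof -
  have a: "inner (y - Pr B y) (Pr B x) = 0" by (rule Pr_spec(2)) (rule Pr_spec(1))
  have b: "inner (x - Pr B x) (Pr B y) = 0" by (rule Pr_spec(2)) (rule Pr_spec(1))
  have a': "inner y (Pr B x) = inner (Pr B y) (Pr B x)" using a by (simp add: inner_diff_left)
  have b': "inner x (Pr B y) = inner (Pr B x) (Pr B y)" using b by (simp add: inner_diff_left)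
  show ?thesis using a' b' by (metis inner_commute)
qed

lemma mp_unique:
  fixes M X Y :: "complex^'n^'n"
  assumes X: "M ** X ** M = M" "X ** M ** X = X" "adjm (M ** X) = M ** X" "adjm (X ** M) = X ** M"
    and Y: "M ** Y ** M = M" "Y ** M ** Y = Y" "adjm (M ** Y) = M ** Y" "adjm (Y ** M) = Y ** M"
  shows "X = Y"
proof -
  have MX: "M ** X = M ** Y"
  proof -
    have "M ** X = (M ** Y ** M) ** X" by (simp only: Y(1))
    also have "\<dots> = (M ** Y) ** (M ** X)" by (simp only: matrix_mul_assoc)
    also have "\<dots> = adjm (M ** Y) ** adjm (M ** X)" by (simp only: X(3) Y(3))
    also have "\<dots> = adjm ((M ** X) ** (M ** Y))" by (simp only: adjm_mult)
    also have "\<dots> = adjm (M ** X ** M ** Y)" by (simp only: matrix_mul_assoc)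
    also have "\<dots> = adjm (M ** Y)" by (simp only: X(1))
    also have "\<dots> = M ** Y" by (simp only: Y(3))
    finally show ?thesis .
  qed
  have XM: "X ** M = Y ** M"
  proof -
    have "X ** M = X ** (M ** Y ** M)" by (simp only: Y(1))
    also have "\<dots> = (X ** M) ** (Y ** M)" by (simp only: matrix_mul_assoc)
    also have "\<dots> = adjm (X ** M) ** adjm (Y ** M)" by (simp only: X(4) Y(4))
    also have "\<dots> = adjm ((Y ** M) ** (X ** M))" by (simp only: adjm_mult)
    also have "\<dots> = adjm (Y ** (M ** X ** M))" by (simp only: matrix_mul_assoc)
    also have "\<dots> = adjm (Y ** M)" by (simp only: X(1))
    also have "\<dots> = Y ** M" by (simp only: Y(4))
    finally show ?thesis .
  qed
  have "X = X ** M ** X" by (simp only: X(2))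
  also have "\<dots> = X ** (M ** X)" by (simp only: matrix_mul_assoc)
  also have "\<dots> = X ** (M ** Y)" by (simp only: MX)
  also have "\<dots> = (X ** M) ** Y" by (simp only: matrix_mul_assoc)
  also have "\<dots> = (Y ** M) ** Y" by (simp only: XM)
  also have "\<dots> = Y" by (simp only: Y(2))
  finally show ?thesis .
qed

lemma Gm_mat: "matrix (Gm B) *v y = Gm B y"
  by (rule matrix_works[OF Gm_linear])

lemma Gm_penrose:
  fixes B :: "complex^'n^'m"
  defines "M \<equiv> adjm B ** B" and "X \<equiv> matrix (Gm B)"
  shows "M ** X ** M = M" "X ** M ** X = X" "adjm (M ** X) = M ** X" "adjm (X ** M) = X ** M"
proof -
  have gs: "M *v Gm B y = Pr B y" for y unfolding M_def by (rule Gm_spec)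
  have rg: "M *v x \<in> Rg B" for x unfolding M_def by (rule Rg_M)
  have gr: "Gm B y \<in> Rg B" for y by (rule Gm_spec)
  have X: "X *v y = Gm B y" for y unfolding X_def by (rule Gm_mat)
  have MPr: "M *v Pr B x = M *v x" for x unfolding M_def by (rule M_Pr)
  have A: "(P ** Q) *v x = P *v (Q *v x)" for P Q :: "complex^'n^'n" and x
    by (simp add: matrix_vector_mul_assoc)
  show "M ** X ** M = M"
    unfolding matrix_eq A X gs using Pr_Rg[OF rg] by simp
  show "X ** M ** X = X"
    unfolding matrix_eq
  proof
    fix y
    have "Gm B (M *v Gm B y) = Gm B y"
      by (rule Gm_unique[OF gr]) (simp only: M_def[symmetric] Pr_Rg[OF rg])
    then show "X ** M ** X *v y = X *v y"
      unfolding A X .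
  qed
  have MXP: "(M ** X) *v x = Pr B x" for x
    unfolding A X gs ..
  show "adjm (M ** X) = M ** X"
    by (rule adjm_eqI) (simp add: MXP Pr_selfadj)
  have XMP: "(X ** M) *v x = Pr B x" for x
  proof -
    have "Gm B (M *v x) = Pr B x"
      by (rule Gm_unique[OF Pr_spec(1)]) (simp only: M_def[symmetric] MPr Pr_Rg[OF rg])
    then show ?thesis unfolding A X .
  qed
  show "adjm (X ** M) = X ** M"
    by (rule adjm_eqI) (simp add: XMP Pr_selfadj)
qed

lemma pinv_eq: "pinv (adjm B ** B) = matrix (Gm B)"
  unfolding pinv_def
proof (rule the_equality)
  show "adjm B ** B ** matrix (Gm B) ** (adjm B ** B) = adjm B ** B \<and>
     matrix (Gm B) ** (adjm B ** B) ** matrix (Gm B) = matrix (Gm B) \<and>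
     adjm (adjm B ** B ** matrix (Gm B)) = adjm B ** B ** matrix (Gm B) \<and>
     adjm (matrix (Gm B) ** (adjm B ** B)) = matrix (Gm B) ** (adjm B ** B)"
    by (intro conjI) (fact Gm_penrose)+
  fix X assume h: "adjm B ** B ** X ** (adjm B ** B) = adjm B ** B \<and>
         X ** (adjm B ** B) ** X = X \<and>
         adjm (adjm B ** B ** X) = adjm B ** B ** X \<and>
         adjm (X ** (adjm B ** B)) = X ** (adjm B ** B)"
  then have h1: "adjm B ** B ** X ** (adjm B ** B) = adjm B ** B"
    and h2: "X ** (adjm B ** B) ** X = X"
    and h3: "adjm (adjm B ** B ** X) = adjm B ** B ** X"
    and h4: "adjm (X ** (adjm B ** B)) = X ** (adjm B ** B)" by auto
  show "X = matrix (Gm B)"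
    by (rule mp_unique[OF h1 h2 h3 h4 Gm_penrose(1)[of B] Gm_penrose(2)[of B] Gm_penrose(3)[of B] Gm_penrose(4)[of B]])
qed

lemma pinv_app: "pinv (adjm B ** B) *v y = Gm B y"
  by (simp add: pinv_eq Gm_mat)

lemma beta_le:
  assumes "in_field F x" "x \<noteq> 0" "cardv x \<le> k"
  shows "beta F A k \<le> norm (A *v x) / norm x"
  unfolding beta_def
  by (rule cInf_lower) (use assms in \<open>auto intro!: bdd_belowI[of _ 0]\<close>)

lemma beta_bound0:
  assumes "in_field F x" "cardv x \<le> k" "beta F A k \<ge> 0"
  shows "beta F A k * norm x \<le> norm (A *v x)"
proof (cases "x = 0")
  case True then show ?thesis by simp
next
  case False
  then have "norm x > 0" by simp
  with beta_le[OF assms(1) False assms(2), of A] show ?thesis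
    by (simp add: pos_le_divide_eq)
qed

lemma realsplit:
  assumes "in_field \<real> p" "in_field \<real> q"
  shows "(norm (p + \<i> *s q))\<^sup>2 = (norm p)\<^sup>2 + (norm (q::complex^'n))\<^sup>2"
proof -
  have p: "Im (p$i) = 0" and q: "Im (q$i) = 0" for i
    using assms by (auto simp: in_field_def complex_is_Real_iff)
  show ?thesis
    by (simp add: power2_norm_eq_inner inner_vec_def inner_complex_def p q sum.distrib)
qed

lemma real_mv: "mat_in_field \<real> A \<Longrightarrow> in_field \<real> u \<Longrightarrow> in_field \<real> (A *v u)"
  by (auto simp: in_field_def mat_in_field_def matrix_vector_mult_def intro!: sum_in_Reals Reals_mult)

lemma cardv_mono: "(\<And>i. w$i = 0 \<Longrightarrow> u$i = 0) \<Longrightarrow> cardv u \<le> cardv w"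
  unfolding cardv_def by (rule card_mono) auto

lemma beta_bound:
  assumes hF: "F = \<real> \<or> F = UNIV" and hA: "mat_in_field F A"
    and "cardv w \<le> k" and hb: "beta F A k \<ge> 0"
  shows "beta F A k * norm w \<le> norm (A *v w)"
  using hF
proof
  assume "F = UNIV"
  then show ?thesis using beta_bound0[of F w k A] assms by (simp add: in_field_def)
next
  assume FR: "F = \<real>"
  define u where "u = (\<chi> j. complex_of_real (Re (w$j)))"
  define v where "v = (\<chi> j. complex_of_real (Im (w$j)))"
  have w: "w = u + \<i> *s v" by (simp add: u_def v_def vec_eq_iff complex_eq_iff)
  have ur: "in_field \<real> u" and vr: "in_field \<real> v" by (auto simp: in_field_def u_def v_def)
  have "cardv u \<le> cardv w" by (rule cardv_mono) (simp add: u_def)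
  then have cu: "cardv u \<le> k" using assms(3) by linarith
  have "cardv v \<le> cardv w" by (rule cardv_mono) (simp add: v_def)
  then have cv: "cardv v \<le> k" using assms(3) by linarith
  let ?b = "beta F A k"
  have bu: "?b * norm u \<le> norm (A *v u)" using beta_bound0[of F u k A] ur cu hb FR by simp
  have bv: "?b * norm v \<le> norm (A *v v)" using beta_bound0[of F v k A] vr cv hb FR by simp
  have Aw: "A *v w = A *v u + \<i> *s (A *v v)" by (simp add: w matrix_vector_right_distrib cmult_scale)
  have AR: "mat_in_field \<real> A" using hA FR by simp
  have "(?b * norm w)\<^sup>2 = (?b * norm u)\<^sup>2 + (?b * norm v)\<^sup>2"
    by (simp add: w realsplit[OF ur vr] power_mult_distrib algebra_simps)
  also have "\<dots> \<le> (norm (A *v u))\<^sup>2 + (norm (A *v v))\<^sup>2"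
    using bu bv hb by (intro add_mono power_mono) auto
  also have "\<dots> = (norm (A *v w))\<^sup>2"
    by (simp add: Aw realsplit[OF real_mv[OF AR ur] real_mv[OF AR vr]])
  finally show ?thesis by (rule power2_le_imp_le) simp
qed

lemma cs_col: "cmod ((adjm A *v r) $ i) \<le> norm (column i A) * norm (r::complex^'m)"
proof -
  have "cmod ((adjm A *v r) $ i) = cmod (\<Sum>k\<in>UNIV. cnj (A$k$i) * r$k)"
    by (simp add: matrix_vector_mult_def)
  also have "\<dots> \<le> (\<Sum>k\<in>UNIV. \<bar>cmod (A$k$i)\<bar> * \<bar>cmod (r$k)\<bar>)"
    by (rule order_trans[OF norm_sum]) (simp add: norm_mult)
  also have "\<dots> \<le> L2_set (\<lambda>k. cmod (A$k$i)) UNIV * L2_set (\<lambda>k. cmod (r$k)) UNIV"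
    by (rule L2_set_mult_ineq)
  also have "\<dots> = norm (column i A) * norm r"
    by (simp add: norm_vec_def column_def)
  finally show ?thesis .
qed

lemma col_le: "norm (column i A) \<le> col_inf_norm A"
  unfolding col_inf_norm_def by (rule Max_ge) auto

lemma adjB_in_Rg: "adjm B *v b \<in> Rg B"
proof -
  let ?q = "adjm B *v b"
  define z where "z = ?q - Pr B ?q"
  have perp: "\<And>w. w \<in> Rg B \<Longrightarrow> inner z w = 0" unfolding z_def by (rule Pr_spec(2))
  have Mz: "(adjm B ** B) *v z = 0" by (rule perp_ker[OF perp])
  have "inner (B *v z) (B *v z) = 0" using M_inner0[of B z z] Mz by simp
  then have Bz: "B *v z = 0" by simp
  have "inner z z = inner ?q z - inner (Pr B ?q) z" by (simp add: z_def inner_diff_left)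
  also have "inner (Pr B ?q) z = 0" using perp[OF Pr_spec(1)] by (simp add: inner_commute)
  also have "inner ?q z = 0" by (simp add: adjm_inner Bz)
  finally have "z = 0" by simp
  then have "?q = Pr B ?q" by (simp add: z_def)
  then show ?thesis by (metis Pr_spec(1))
qed

lemma restrict_mv: "(\<And>i. i \<notin> S \<Longrightarrow> v$i = 0) \<Longrightarrow> restrict_cols A S *v v = A *v v"
  by (auto simp: vec_eq_iff matrix_vector_mult_def restrict_cols_def intro!: sum.cong)

lemma adj_restrict_in: "i \<in> S \<Longrightarrow> (adjm (restrict_cols A S) *v r)$i = (adjm A *v r)$i"
  by (simp add: matrix_vector_mult_def restrict_cols_def)

lemma adj_restrict_out: "i \<notin> S \<Longrightarrow> (adjm (restrict_cols A S) *v r)$i = 0"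
  by (simp add: matrix_vector_mult_def restrict_cols_def)

lemma Rg_supp: "r \<in> Rg (restrict_cols A S) \<Longrightarrow> i \<notin> S \<Longrightarrow> r$i = 0"
  unfolding Rg_def by (auto simp: matrix_vector_mul_assoc[symmetric] adj_restrict_out)

theorem proposition4p7:
  fixes F :: "complex set"
    and A :: "complex ^ 'n ^ 'm"
    and x0 :: "complex ^ 'n"
    and eps b :: "complex ^ 'm"
    and mu :: real and N K :: nat and S :: "'n set"
  assumes hF: "F = \<real> \<or> F = UNIV"
    and hA: "mat_in_field F A" and hx0: "in_field F x0" and heps: "in_field F eps"
    and hcol: "col_inf_norm A \<le> 1"
    and hmu: "mu > 0"
    and hS: "S = supp x0" and hK: "card S = K"
    and hb: "b = A *v x0 + eps"
    and hN: "N \<ge> 1" and hbN: "beta F A N > 0" and hbK: "beta F A K > 0"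
    and heps_small: "norm eps < (beta F A N)\<^sup>2 * sqrt mu"
    and hx0_large: "\<forall>j\<in>S. cmod (x0 $ j) >
        sqrt mu / (beta F A N)\<^sup>2 + (beta F A N)\<^sup>2 * sqrt mu / beta F A K"
  shows "let x' = orc_sol A S b;
             z' = (mat 1 - adjm A ** A) *v x' + adjm A *v b
         in \<forall>i. cmod (z' $ i) \<notin> {(beta F A N)\<^sup>2 * sqrt mu .. sqrt mu / (beta F A N)\<^sup>2}"
proof -
  define B where "B = restrict_cols A S"
  define q where "q = adjm B *v b"
  define x' where "x' = orc_sol A S b"
  define z' where "z' = (mat 1 - adjm A ** A) *v x' + adjm A *v b"
  let ?bN = "beta F A N" and ?bK = "beta F A K"
  have x'eq: "x' = Gm B q" by (simp add: x'_def orc_sol_def B_def q_def pinv_app)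
  have qR: "q \<in> Rg B" unfolding q_def by (rule adjB_in_Rg)
  have Mx': "(adjm B ** B) *v x' = q" using Gm_spec(2)[of B q] Pr_Rg[OF qR] x'eq by simp
  have x'R: "x' \<in> Rg B" using Gm_spec(1) x'eq by simp
  have x'supp: "x'$i = 0" if "i \<notin> S" for i using Rg_supp[of x' A S i] x'R that B_def by simp
  have x0supp: "x0$i = 0" if "i \<notin> S" for i using that hS by (simp add: supp_def)
  have Bx': "B *v x' = A *v x'" unfolding B_def by (rule restrict_mv) (rule x'supp)
  have Bx0: "B *v x0 = A *v x0" unfolding B_def by (rule restrict_mv) (rule x0supp)
  define r where "r = b - A *v x'"
  have Br: "adjm B *v r = 0"
  proof -
    have "adjm B *v r = q - adjm B *v (B *v x')"
      by (simp add: r_def q_def Bx' matrix_vector_mult_diff_distrib)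
    also have "\<dots> = 0" using Mx' by (simp add: matrix_vector_mul_assoc)
    finally show ?thesis .
  qed
  define d where "d = x' - x0"
  have r_eq: "eps = r + B *v d"
    by (simp add: r_def d_def hb matrix_vector_mult_diff_distrib Bx' Bx0)
  have orth: "inner r (B *v d) = 0"
    using adjm_inner[of B r d] Br by (simp add: inner_commute)
  have pyth: "(norm eps)\<^sup>2 = (norm r)\<^sup>2 + (norm (B *v d))\<^sup>2"
    unfolding r_eq by (rule norm_add_Pythagorean) (simp add: orthogonal_def orth)
  have "(norm r)\<^sup>2 \<le> (norm eps)\<^sup>2" using pyth by simp
  then have nr: "norm r \<le> norm eps" by (rule power2_le_imp_le) simp
  have "(norm (B *v d))\<^sup>2 \<le> (norm eps)\<^sup>2" using pyth by simp
  then have nBd: "norm (B *v d) \<le> norm eps" by (rule power2_le_imp_le) simp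
  have dsupp: "d$i = 0" if "i \<notin> S" for i using that x'supp x0supp by (simp add: d_def)
  have finS: "finite S" by simp
  have cd: "cardv d \<le> K"
  proof -
    have "{i. d$i \<noteq> 0} \<subseteq> S" using dsupp by auto
    then show ?thesis unfolding cardv_def hK[symmetric] by (rule card_mono[OF finS])
  qed
  have Bd: "B *v d = A *v d" unfolding B_def by (rule restrict_mv) (rule dsupp)
  have "?bK * norm d \<le> norm (A *v d)"
    by (rule beta_bound[OF hF hA cd]) (use hbK in simp)
  then have "?bK * norm d \<le> norm eps" using nBd Bd by simp
  then have nd: "norm d < ?bN\<^sup>2 * sqrt mu / ?bK"
    using heps_small hbK by (simp add: pos_less_divide_eq mult.commute)
  have z'eq: "z' = x' + adjm A *v r"
    by (simp add: z'_def r_def matrix_vector_mult_diff_rdistrib matrix_vector_mult_diff_distrib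
        matrix_vector_mul_assoc algebra_simps)
  have "cmod (z' $ i) \<notin> {?bN\<^sup>2 * sqrt mu .. sqrt mu / ?bN\<^sup>2}" for i
  proof (cases "i \<in> S")
    case True
    have "(adjm A *v r)$i = 0" using adj_restrict_in[OF True, of A r] Br B_def by simp
    then have "z'$i = x0$i + d$i" by (simp add: z'eq d_def)
    then have "cmod (z'$i) \<ge> cmod (x0$i) - cmod (d$i)"
      using norm_diff_ineq[of "x0$i" "d$i"] by simp
    moreover have "cmod (d$i) \<le> norm d" by (rule Finite_Cartesian_Product.norm_nth_le)
    ultimately have "cmod (z'$i) > sqrt mu / ?bN\<^sup>2"
      using hx0_large True nd by fastforce
    then show ?thesis by simp
  next
    case False
    have "z'$i = (adjm A *v r)$i" using x'supp[OF False] by (simp add: z'eq)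
    also have "cmod \<dots> \<le> norm (column i A) * norm r" by (rule cs_col)
    also have "\<dots> \<le> 1 * norm r"
      using col_le[of i A] hcol by (intro mult_right_mono) auto
    finally have "cmod (z'$i) < ?bN\<^sup>2 * sqrt mu" using nr heps_small by simp
    then show ?thesis by simp
  qed
  then show ?thesis unfolding Let_def x'_def[symmetric] z'_def[symmetric] by blast
qed

end
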